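(* Let $\mathscr N$ be a chemical reaction network. Let $p\ge2$ be the length of its finest independent decomposition and $q\ge2$ the length of its finest incidence independent decomposition. Then the number of independent decompositions of $\mathscr N$ is the Bell number $B_p$, and the number of incidence independent decompositions of $\mathscr N$ is $B_q$. Here the Bell numbers are defined by $B_0=1$ and $$B_p=\sum_{k=1}^{p}\binom{p-1}{k-1}B_{p-k},$$ i.e., $B_p$ is the number of partitions of a $p$-element set.
   Context: A chemical reaction network (CRN) $\mathscr N=(\mathscr S,\mathscr C,\mathscr R)$ consists of: - a finite set $\mathscr S$ of species; - a finite set $\mathscr C\subseteq\mathbb R^{\mathscr S}_{\ge0}$ of complexes; - a set $\mathscr R\subseteq\mathscr C\times\mathscr C$ of reactions, with no reaction $y\to y$ and every complex occurring in some reaction. A decomposition of $\mathscr N$ is the set of subnetworks $\mathscr N_1,\ldots,\mathscr N_k$ induced by a partition $\{\mathscr R_1,\ldots,\mathscr R_k\}$ of $\mathscr R$. Its length is $k$. The trivial decomposition ($k=1$) is counted. Let $S$ be the stoichiometric subspace $\operatorname{span}\{y'-y: y\to y'\in\mathscr R\}$, and $S_i$ the analogous subspace of $\mathscr N_i$. The decomposition is independent if $S=S_1\oplus\cdots\oplus S_k$. The decomposition is incidence independent if $n-l=\sum_i(n_i-l_i)$, where $n$ and $l$ are the numbers of complexes and of linkage classes (connected components of the underlying undirected graph) of $\mathscr N$, and $n_i$ and $l_i$ are those of $\mathscr N_i$. The finest independent (resp. incidence independent) decomposition is the unique independent (resp. incidence independent) decomposition that has no independent (resp. incidence independent) proper refinement.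 A refinement of a decomposition induced by $\{\mathscr R_i\}$ is one induced by a partition each of whose blocks lies in some $\mathscr R_i$. *)

theory Defs
  imports "HOL-Analysis.Analysis"
begin

function Bell :: "nat \<Rightarrow> nat" where
  "Bell 0 = 1"
| "Bell (Suc n) = (\<Sum>k\<in>{1..Suc n}. (n choose (k - 1)) * Bell (Suc n - k))"
  by pat_completeness auto
termination by (relation "Wellfounded.measure id") auto

text \<open>Complexes are vectors in R^S, with S a finite type of species.
  A reaction is a pair (y, y') meaning y \<rightarrow> y'.\<close>
type_synonym 's complex = "real ^ 's"
type_synonym 's reaction = "'s complex \<times> 's complex"

text \<open>A CRN is determined by its reaction set; the complexes are those occurring
  in reactions.\<close>
definition is_crn :: "('s::finite) reaction set \<Rightarrow> bool" where
  "is_crn R \<longleftrightarrow> finite R \<and> (\<forall>(y, y')\<in>R. y \<noteq> y')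
     \<and> (\<forall>(y, y')\<in>R. (\<forall>i. y $ i \<ge> 0) \<and> (\<forall>i. y' $ i \<ge> 0))"

definition complexes :: "('s::finite) reaction set \<Rightarrow> 's complex set" where
  "complexes R = fst ` R \<union> snd ` R"

definition stoich_subspace :: "('s::finite) reaction set \<Rightarrow> 's complex set" where
  "stoich_subspace R = span ((\<lambda>(y, y'). y' - y) ` R)"

definition linkage_classes :: "('s::finite) reaction set \<Rightarrow> 's complex set set" where
  "linkage_classes R = complexes R // ((R \<union> R\<inverse>)\<^sup>*)"

definition n_minus_l :: "('s::finite) reaction set \<Rightarrow> int" where
  "n_minus_l R = int (card (complexes R)) - int (card (linkage_classes R))"

definition decomposition :: "('s::finite) reaction set \<Rightarrow> 's reaction set set \<Rightarrow> bool" where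
  "decomposition R P \<longleftrightarrow> \<Union>P = R \<and> {} \<notin> P
     \<and> (\<forall>A\<in>P. \<forall>B\<in>P. A \<noteq> B \<longrightarrow> A \<inter> B = {})"

definition independent_dec :: "('s::finite) reaction set \<Rightarrow> 's reaction set set \<Rightarrow> bool" where
  "independent_dec R P \<longleftrightarrow>
     stoich_subspace R = {(\<Sum>A\<in>P. v A) | v. \<forall>A\<in>P. v A \<in> stoich_subspace A}
   \<and> (\<forall>v. (\<forall>A\<in>P. v A \<in> stoich_subspace A) \<and> (\<Sum>A\<in>P. v A) = 0 \<longrightarrow> (\<forall>A\<in>P. v A = 0))"

definition incidence_independent_dec :: "('s::finite) reaction set \<Rightarrow> 's reaction set set \<Rightarrow> bool" where
  "incidence_independent_dec R P \<longleftrightarrow> n_minus_l R = (\<Sum>A\<in>P. n_minus_l A)"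

definition refines :: "'a set set \<Rightarrow> 'a set set \<Rightarrow> bool" where
  "refines Q P \<longleftrightarrow> (\<forall>B\<in>Q. \<exists>A\<in>P. B \<subseteq> A)"

definition finest_dec :: "(('s::finite) reaction set \<Rightarrow> 's reaction set set \<Rightarrow> bool)
    \<Rightarrow> 's reaction set \<Rightarrow> 's reaction set set \<Rightarrow> bool" where
  "finest_dec prop R P \<longleftrightarrow> decomposition R P \<and> prop R P
     \<and> \<not> (\<exists>Q. decomposition R Q \<and> prop R Q \<and> refines Q P \<and> Q \<noteq> P)"

end

theory Submission
  imports Defs
begin


lemma Bell_Suc': "Bell (Suc m) = (\<Sum>j\<le>m. (m choose j) * Bell (m - j))"
proof -
  have "Bell (Suc m) = (\<Sum>k\<in>{1..Suc m}. (m choose (k - 1)) * Bell (Suc m - k))" by simp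
  also have "\<dots> = (\<Sum>j\<in>{0..m}. (m choose j) * Bell (m - j))"
    using sum.shift_bounds_cl_Suc_ivl[of "\<lambda>k. (m choose (k - 1)) * Bell (Suc m - k)" 0 m] by simp
  finally show ?thesis by (simp add: atLeast0AtMost)
qed

lemma sum_Pow_card:
  assumes "finite A"
  shows "(\<Sum>K\<in>Pow A. g (card K)) = (\<Sum>j\<le>card A. (card A choose j) * (g j::nat))"
proof -
  have "(\<Sum>K\<in>Pow A. g (card K)) = (\<Sum>j\<le>card A. \<Sum>K\<in>{K. K \<in> Pow A \<and> card K = j}. g (card K))"
    by (rule sum.group[symmetric]) (use assms card_mono in auto)
  also have "\<dots> = (\<Sum>j\<le>card A. \<Sum>K\<in>{K. K \<in> Pow A \<and> card K = j}. g j)"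
    by (intro sum.cong) auto
  also have "\<dots> = (\<Sum>j\<le>card A. (card A choose j) * g j)"
    using n_subsets[OF assms] by simp
  finally show ?thesis .
qed

lemma card_partitions_Bell:
  "finite A \<Longrightarrow> card {P. partition_on A P} = Bell (card A)"
proof (induction "card A" arbitrary: A rule: less_induct)
  case less
  show ?case
  proof (cases "A = {}")
    case True
    have e: "Collect (partition_on {}) = {{}}" by (auto simp: partition_on_empty)
    show ?thesis unfolding True e by simp
  next
    case False
    then obtain x where x: "x \<in> A" by blast
    define A0 where "A0 = A - {x}"
    define m where "m = card A0"
    have fA0: "finite A0" using less.prems A0_def by simp
    have cA: "card A = Suc m" using x less.prems unfolding m_def A0_def
      using card_gt_0_iff[of A] by fastforce
    define \<psi> where "\<psi> = (\<lambda>(K::'a set, \<sigma>::'a set set). insert (insert x K) \<sigma>)"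
    have xA0: "x \<notin> A0" by (simp add: A0_def)
    have bij: "bij_betw \<psi> (Sigma (Pow A0) (\<lambda>K. {\<sigma>. partition_on (A0 - K) \<sigma>})) {P. partition_on A P}"
    proof (rule bij_betwI')
      fix a b assume a: "a \<in> Sigma (Pow A0) (\<lambda>K. {\<sigma>. partition_on (A0 - K) \<sigma>})"
        and b: "b \<in> Sigma (Pow A0) (\<lambda>K. {\<sigma>. partition_on (A0 - K) \<sigma>})"
      obtain K \<sigma> where a': "a = (K, \<sigma>)" "K \<subseteq> A0" "partition_on (A0 - K) \<sigma>" using a by auto
      obtain K' \<sigma>' where b': "b = (K', \<sigma>')" "K' \<subseteq> A0" "partition_on (A0 - K') \<sigma>'" using b by auto
      show "(\<psi> a = \<psi> b) = (a = b)"
      proof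
        assume eq: "\<psi> a = \<psi> b"
        have nx: "\<forall>B\<in>\<sigma>. x \<notin> B" "\<forall>B\<in>\<sigma>'. x \<notin> B"
          using a'(3) b'(3) xA0 by (auto simp: partition_on_def)
        have e: "insert (insert x K) \<sigma> = insert (insert x K') \<sigma>'" using eq a'(1) b'(1) by (simp add: \<psi>_def)
        have "insert x K \<in> insert (insert x K') \<sigma>'" using e by blast
        hence KK: "insert x K = insert x K'" using nx by auto
        hence "K = K'" using a'(2) b'(2) xA0 by (metis Diff_insert_absorb subsetD)
        moreover have "\<sigma> = \<sigma>'"
        proof -
          have "insert x K \<notin> \<sigma>" "insert x K \<notin> \<sigma>'" using nx by auto
          thus ?thesis using e KK by (metis insert_Diff_if singletonI Diff_insert_absorb)
        qed
        ultimately show "a = b" using a'(1) b'(1) by simp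
      qed simp
    next
      fix a assume a: "a \<in> Sigma (Pow A0) (\<lambda>K. {\<sigma>. partition_on (A0 - K) \<sigma>})"
      obtain K \<sigma> where a': "a = (K, \<sigma>)" "K \<subseteq> A0" "partition_on (A0 - K) \<sigma>" using a by auto
      have d: "disjnt (insert x K) (\<Union>\<sigma>)" using a'(3) xA0 by (auto simp: partition_on_def disjnt_def)
      have "A - insert x K = A0 - K" using A0_def by auto
      then show "\<psi> a \<in> {P. partition_on A P}"
        using a' d x by (auto simp: \<psi>_def partition_on_insert A0_def)
    next
      fix P assume P: "P \<in> {P. partition_on A P}"
      hence P': "partition_on A P" by simp
      then obtain B where B: "B \<in> P" "x \<in> B" using x by (auto simp: partition_on_def)
      have d: "disjnt B (\<Union>(P - {B}))" using P' B
        by (auto simp: partition_on_def disjnt_def pairwise_def)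
      have PB: "P = insert B (P - {B})" using B by auto
      have p2: "partition_on (A - B) (P - {B})" "B \<subseteq> A"
        using P' PB d partition_on_insert by metis+
      have "A - B = A0 - (B - {x})" using A0_def B by auto
      hence "(B - {x}, P - {B}) \<in> Sigma (Pow A0) (\<lambda>K. {\<sigma>. partition_on (A0 - K) \<sigma>})"
        using p2 A0_def by auto
      moreover have "insert x (B - {x}) = B" using B by auto
      hence "P = \<psi> (B - {x}, P - {B})" using B by (auto simp: \<psi>_def)
      ultimately show "\<exists>a\<in>Sigma (Pow A0) (\<lambda>K. {\<sigma>. partition_on (A0 - K) \<sigma>}). P = \<psi> a" by blast
    qed
    have "card {P. partition_on A P} = card (Sigma (Pow A0) (\<lambda>K. {\<sigma>. partition_on (A0 - K) \<sigma>}))"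
      using bij_betw_same_card[OF bij] by simp
    also have "\<dots> = (\<Sum>K\<in>Pow A0. card {\<sigma>. partition_on (A0 - K) \<sigma>})"
      using fA0 by (simp add: card_SigmaI finitely_many_partition_on)
    also have "\<dots> = (\<Sum>K\<in>Pow A0. Bell (m - card K))"
    proof (rule sum.cong[OF refl])
      fix K assume K: "K \<in> Pow A0"
      have fK: "finite K" using K fA0 finite_subset by auto
      have c: "card (A0 - K) = m - card K" using K fK by (simp add: m_def card_Diff_subset)
      have "card (A0 - K) < card A" using c cA by simp
      then show "card {\<sigma>. partition_on (A0 - K) \<sigma>} = Bell (m - card K)"
        using less.hyps[of "A0 - K"] fA0 c by simp
    qed
    also have "\<dots> = (\<Sum>j\<le>m. (m choose j) * Bell (m - j))"
      using sum_Pow_card[OF fA0, of "\<lambda>k. Bell (m - k)"] by (simp add: m_def)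
    also have "\<dots> = Bell (card A)" using cA Bell_Suc' by simp
    finally show ?thesis .
  qed
qed



lemma decomposition_partition_on: "decomposition E P \<longleftrightarrow> partition_on E P"
  by (auto simp: decomposition_def partition_on_def pairwise_def disjnt_def)

definition meet :: "'a set set \<Rightarrow> 'a set set \<Rightarrow> 'a set set" where
  "meet D1 D2 = {A \<inter> B | A B. A \<in> D1 \<and> B \<in> D2} - {{}}"

lemma meet_decomposition:
  assumes "decomposition E D1" "decomposition E D2"
  shows "decomposition E (meet D1 D2)"
proof -
  have d1: "\<Union>D1 = E" "\<And>A B. A \<in> D1 \<Longrightarrow> B \<in> D1 \<Longrightarrow> A \<noteq> B \<Longrightarrow> A \<inter> B = {}"
    using assms(1) unfolding decomposition_def by auto
  have d2: "\<Union>D2 = E" "\<And>A B. A \<in> D2 \<Longrightarrow> B \<in> D2 \<Longrightarrow> A \<noteq> B \<Longrightarrow> A \<inter> B = {}"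
    using assms(2) unfolding decomposition_def by auto
  have "\<Union>(meet D1 D2) = E"
  proof
    show "\<Union>(meet D1 D2) \<subseteq> E" using d1 d2 unfolding meet_def by auto
    show "E \<subseteq> \<Union>(meet D1 D2)"
    proof
      fix x assume "x \<in> E"
      then obtain A B where "A \<in> D1" "B \<in> D2" "x \<in> A" "x \<in> B" using d1 d2 by blast
      then have "A \<inter> B \<in> meet D1 D2" "x \<in> A \<inter> B" unfolding meet_def by auto
      then show "x \<in> \<Union>(meet D1 D2)" by blast
    qed
  qed
  moreover have "{} \<notin> meet D1 D2" unfolding meet_def by simp
  moreover have "\<forall>X\<in>meet D1 D2. \<forall>Y\<in>meet D1 D2. X \<noteq> Y \<longrightarrow> X \<inter> Y = {}"
  proof (intro ballI impI)
    fix X Y assume "X \<in> meet D1 D2" "Y \<in> meet D1 D2" "X \<noteq> Y"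
    then obtain A B A' B' where "A \<in> D1" "B \<in> D2" "A' \<in> D1" "B' \<in> D2" "X = A \<inter> B" "Y = A' \<inter> B'"
      unfolding meet_def by blast
    then show "X \<inter> Y = {}" using d1(2)[of A A'] d2(2)[of B B'] \<open>X \<noteq> Y\<close> by auto
  qed
  ultimately show ?thesis unfolding decomposition_def by blast
qed

lemma meet_refines: "refines (meet D1 D2) D1" "refines (meet D1 D2) D2"
  unfolding refines_def meet_def by auto

lemma coarsenings_count:
  assumes "finite E" "decomposition E P"
  shows "card {D. decomposition E D \<and> refines P D} = Bell (card P)"
proof -
  have P: "\<Union>P = E" "{} \<notin> P" "\<And>A B. A \<in> P \<Longrightarrow> B \<in> P \<Longrightarrow> A \<noteq> B \<Longrightarrow> A \<inter> B = {}"
    using assms(2) unfolding decomposition_def by auto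
  have fP: "finite P" using assms P(1) by (metis finite_UnionD)
  have key: "B \<in> X \<longleftrightarrow> B \<subseteq> \<Union>X" if XP: "X \<subseteq> P" and BP: "B \<in> P" for X B
  proof
    assume "B \<subseteq> \<Union>X"
    moreover obtain b where "b \<in> B" using BP P(2) by (metis ex_in_conv)
    ultimately obtain B' where "B' \<in> X" "b \<in> B'" by blast
    moreover have "B' \<in> P" using \<open>B' \<in> X\<close> XP by blast
    ultimately have "B = B'" using P(3)[of B B'] BP \<open>b \<in> B\<close> by auto
    then show "B \<in> X" using \<open>B' \<in> X\<close> by simp
  qed blast
  have bij: "bij_betw (\<lambda>\<pi>. Union ` \<pi>) {\<pi>. partition_on P \<pi>} {D. decomposition E D \<and> refines P D}"
  proof (rule bij_betwI')
    fix \<pi>1 \<pi>2 assume a: "\<pi>1 \<in> {\<pi>. partition_on P \<pi>}" "\<pi>2 \<in> {\<pi>. partition_on P \<pi>}"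
    have sub: "X \<subseteq> P" if "X \<in> \<pi>1 \<or> X \<in> \<pi>2" for X using a that by (auto simp: partition_on_def)
    have eqX: "X = Y" if "X \<in> \<pi>1 \<or> X \<in> \<pi>2" "Y \<in> \<pi>1 \<or> Y \<in> \<pi>2" "\<Union>X = \<Union>Y" for X Y
    proof -
      have "\<forall>B\<in>P. B \<in> X \<longleftrightarrow> B \<in> Y" using key[OF sub[OF that(1)]] key[OF sub[OF that(2)]] that(3) by simp
      thus ?thesis using sub[OF that(1)] sub[OF that(2)] by blast
    qed
    show "(Union ` \<pi>1 = Union ` \<pi>2) = (\<pi>1 = \<pi>2)"
    proof
      assume e: "Union ` \<pi>1 = Union ` \<pi>2"
      show "\<pi>1 = \<pi>2"
      proof (intro set_eqI iffI)
        fix X assume "X \<in> \<pi>1"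
        then obtain Y where "Y \<in> \<pi>2" "\<Union>X = \<Union>Y" using e by (metis imageE imageI)
        then show "X \<in> \<pi>2" using eqX \<open>X \<in> \<pi>1\<close> by metis
      next
        fix X assume "X \<in> \<pi>2"
        then obtain Y where "Y \<in> \<pi>1" "\<Union>X = \<Union>Y" using e by (metis imageE imageI)
        then show "X \<in> \<pi>1" using eqX \<open>X \<in> \<pi>2\<close> by metis
      qed
    qed simp
  next
    fix \<pi> assume a: "\<pi> \<in> {\<pi>. partition_on P \<pi>}"
    hence \<pi>: "\<Union>\<pi> = P" "{} \<notin> \<pi>" "\<And>X Y. X \<in> \<pi> \<Longrightarrow> Y \<in> \<pi> \<Longrightarrow> X \<noteq> Y \<Longrightarrow> X \<inter> Y = {}"
      by (auto simp: partition_on_def pairwise_def disjnt_def)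
    have "\<Union>(Union ` \<pi>) = E" using \<pi>(1) P(1) by auto
    moreover have "{} \<notin> Union ` \<pi>"
    proof
      assume "{} \<in> Union ` \<pi>"
      then obtain X where "X \<in> \<pi>" "\<Union>X = {}" by auto
      moreover then obtain B where "B \<in> X" using \<pi>(2) by (metis ex_in_conv)
      ultimately show False using \<pi>(1) P(2) by auto
    qed
    moreover have "\<forall>A\<in>Union ` \<pi>. \<forall>B\<in>Union ` \<pi>. A \<noteq> B \<longrightarrow> A \<inter> B = {}"
    proof (intro ballI impI)
      fix A B assume "A \<in> Union ` \<pi>" "B \<in> Union ` \<pi>" "A \<noteq> B"
      then obtain X Y where XY: "X \<in> \<pi>" "Y \<in> \<pi>" "A = \<Union>X" "B = \<Union>Y" "X \<noteq> Y" by auto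
      have "X \<inter> Y = {}" using \<pi>(3) XY by blast
      moreover have "X \<subseteq> P" "Y \<subseteq> P" using XY \<pi>(1) by auto
      ultimately have "\<forall>b\<in>X. \<forall>c\<in>Y. b \<inter> c = {}" using P(3) by blast
      then show "A \<inter> B = {}" using XY by blast
    qed
    moreover have "refines P (Union ` \<pi>)" unfolding refines_def using \<pi>(1) by blast
    ultimately show "Union ` \<pi> \<in> {D. decomposition E D \<and> refines P D}"
      by (simp add: decomposition_def)
  next
    fix D assume "D \<in> {D. decomposition E D \<and> refines P D}"
    hence D: "\<Union>D = E" "{} \<notin> D" "\<And>A B. A \<in> D \<Longrightarrow> B \<in> D \<Longrightarrow> A \<noteq> B \<Longrightarrow> A \<inter> B = {}"
      "\<And>B. B \<in> P \<Longrightarrow> \<exists>A\<in>D. B \<subseteq> A"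
      unfolding decomposition_def refines_def by auto
    define \<pi> where "\<pi> = (\<lambda>A. {B\<in>P. B \<subseteq> A}) ` D"
    have U: "\<Union>{B\<in>P. B \<subseteq> A} = A" if AD: "A \<in> D" for A
    proof
      show "A \<subseteq> \<Union>{B\<in>P. B \<subseteq> A}"
      proof
        fix a assume "a \<in> A"
        then obtain B where B: "B \<in> P" "a \<in> B" using AD D(1) P(1) by blast
        then obtain A' where "A' \<in> D" "B \<subseteq> A'" using D(4) by blast
        hence "A' = A" using D(3) AD \<open>a \<in> A\<close> B by blast
        thus "a \<in> \<Union>{B\<in>P. B \<subseteq> A}" using B \<open>B \<subseteq> A'\<close> by blast
      qed
    qed blast
    have "partition_on P \<pi>"
    proof (rule partition_onI)
      show "\<Union>\<pi> = P"
      proof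
        show "\<Union>\<pi> \<subseteq> P" unfolding \<pi>_def by auto
        show "P \<subseteq> \<Union>\<pi>"
        proof
          fix B assume "B \<in> P"
          then obtain A where "A \<in> D" "B \<subseteq> A" using D(4) by blast
          then show "B \<in> \<Union>\<pi>" unfolding \<pi>_def using \<open>B \<in> P\<close> by auto
        qed
      qed
      show "{} \<notin> \<pi>"
      proof
        assume "{} \<in> \<pi>"
        then obtain A where "A \<in> D" "{B\<in>P. B \<subseteq> A} = {}" unfolding \<pi>_def by auto
        then have "A = {}" using U[of A] by (metis Union_empty)
        then show False using \<open>A \<in> D\<close> D(2) by simp
      qed
      fix p q assume "p \<in> \<pi>" "q \<in> \<pi>" "p \<noteq> q"
      then obtain A A' where "A \<in> D" "A' \<in> D" "p = {B\<in>P. B \<subseteq> A}" "q = {B\<in>P. B \<subseteq> A'}" "A \<noteq> A'"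
        unfolding \<pi>_def by blast
      then have "A \<inter> A' = {}" using D(3) by blast
      then have "\<forall>B\<in>P. \<not>(B \<subseteq> A \<and> B \<subseteq> A')" using P(2) by (metis Int_greatest subset_empty)
      then show "disjnt p q" using \<open>p = _\<close> \<open>q = _\<close> unfolding disjnt_def by auto
    qed
    moreover have "D = Union ` \<pi>" unfolding \<pi>_def using U by (simp add: image_image)
    ultimately show "\<exists>\<pi>\<in>{\<pi>. partition_on P \<pi>}. D = Union ` \<pi>" by blast
  qed
  have "card {D. decomposition E D \<and> refines P D} = card {\<pi>. partition_on P \<pi>}"
    using bij_betw_same_card[OF bij] by simp
  also have "\<dots> = Bell (card P)" using card_partitions_Bell[OF fP] .
  finally show ?thesis .
qed

lemma finest_count:
  assumes fin: "finite E" and fst: "finest_dec prop E P"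
    and C1: "\<And>D D'. decomposition E D \<Longrightarrow> prop E D \<Longrightarrow> decomposition E D' \<Longrightarrow> refines D D' \<Longrightarrow> prop E D'"
    and C2: "\<And>D1 D2. decomposition E D1 \<Longrightarrow> decomposition E D2 \<Longrightarrow> prop E D1 \<Longrightarrow> prop E D2 \<Longrightarrow> prop E (meet D1 D2)"
  shows "card {D. decomposition E D \<and> prop E D} = Bell (card P)"
proof -
  have P: "decomposition E P" "prop E P"
    and nr: "\<And>Q. decomposition E Q \<Longrightarrow> prop E Q \<Longrightarrow> refines Q P \<Longrightarrow> Q = P"
    using fst unfolding finest_dec_def by auto
  have "(decomposition E D \<and> prop E D) \<longleftrightarrow> (decomposition E D \<and> refines P D)" for D
  proof
    assume "decomposition E D \<and> prop E D"
    hence D: "decomposition E D" "prop E D" by auto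
    have "meet P D = P" using nr[OF meet_decomposition[OF P(1) D(1)] C2[OF P(1) D(1) P(2) D(2)] meet_refines(1)] .
    then show "decomposition E D \<and> refines P D" using meet_refines(2)[of P D] D by simp
  next
    assume "decomposition E D \<and> refines P D"
    then show "decomposition E D \<and> prop E D" using C1[OF P] by blast
  qed
  hence "{D. decomposition E D \<and> prop E D} = {D. decomposition E D \<and> refines P D}" by simp
  then show ?thesis using coarsenings_count[OF fin P(1)] by simp
qed



definition wv :: "('s::finite) reaction \<Rightarrow> 's complex" where
  "wv = (\<lambda>(y, y'). y' - y)"

lemma stoich_wv: "stoich_subspace A = span (wv ` A)"
  unfolding stoich_subspace_def wv_def ..

lemma span_image_sum:
  assumes "finite A" "x \<in> span (wv ` A)"
  shows "\<exists>c. x = (\<Sum>e\<in>A. c e *\<^sub>R wv e)"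
  using assms(2)
proof (induction rule: span_induct_alt)
  case base
  show ?case by (rule exI[of _ "\<lambda>_. 0"]) simp
next
  case (step c0 x y)
  then obtain e0 where e0: "e0 \<in> A" "x = wv e0" by auto
  from step obtain c where c: "y = (\<Sum>e\<in>A. c e *\<^sub>R wv e)" by auto
  have "(\<Sum>e\<in>A. (c e + (if e = e0 then c0 else 0)) *\<^sub>R wv e)
      = (\<Sum>e\<in>A. c e *\<^sub>R wv e) + (\<Sum>e\<in>A. (if e = e0 then c0 else 0) *\<^sub>R wv e)"
    by (simp add: scaleR_add_left sum.distrib)
  also have "(\<Sum>e\<in>A. (if e = e0 then c0 else 0) *\<^sub>R wv e) = c0 *\<^sub>R wv e0"
  proof -
    have "(\<Sum>e\<in>A. (if e = e0 then c0 else 0) *\<^sub>R wv e) = (\<Sum>e\<in>A. if e = e0 then c0 *\<^sub>R wv e0 else 0)"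
      by (rule sum.cong) auto
    also have "\<dots> = c0 *\<^sub>R wv e0" using e0(1) assms(1) by (simp add: sum.delta)
    finally show ?thesis .
  qed
  finally have "(\<Sum>e\<in>A. (c e + (if e = e0 then c0 else 0)) *\<^sub>R wv e) = c0 *\<^sub>R x + y"
    using c e0 by (simp add: add.commute)
  then show ?case by (intro exI[of _ "\<lambda>e. c e + (if e = e0 then c0 else 0)"]) simp
qed

lemma sum_in_span: "(\<Sum>e\<in>A. c e *\<^sub>R wv e) \<in> span (wv ` A)"
  by (intro span_sum span_scale span_base) auto

definition indep_rel :: "('s::finite) reaction set \<Rightarrow> 's reaction set set \<Rightarrow> bool" where
  "indep_rel R D \<longleftrightarrow> (\<forall>c. (\<Sum>e\<in>R. c e *\<^sub>R wv e) = 0 \<longrightarrow> (\<forall>A\<in>D. (\<Sum>e\<in>A. c e *\<^sub>R wv e) = 0))"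

lemma sum_decomp:
  assumes "finite R" "decomposition R D"
  shows "(\<Sum>e\<in>R. f e) = (\<Sum>A\<in>D. \<Sum>e\<in>A. (f e :: 'b::comm_monoid_add))"
proof -
  have d: "\<Union>D = R" "\<forall>A\<in>D. \<forall>B\<in>D. A \<noteq> B \<longrightarrow> A \<inter> B = {}" using assms(2) by (auto simp: decomposition_def)
  have "\<forall>A\<in>D. finite A" using d(1) assms(1) by (metis Union_upper finite_subset)
  then show ?thesis using sum.Union_disjoint[of D f] d by simp
qed

lemma indep_iff:
  assumes fin: "finite R" and dec: "decomposition R D"
  shows "independent_dec R D \<longleftrightarrow> indep_rel R D"
proof -
  have d: "\<Union>D = R" "\<forall>A\<in>D. \<forall>B\<in>D. A \<noteq> B \<longrightarrow> A \<inter> B = {}" using dec by (auto simp: decomposition_def)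
  have finA: "finite A" if "A \<in> D" for A using d(1) fin that by (metis Union_upper finite_subset)
  have fD: "finite D" using d(1) fin by (metis finite_UnionD)
  show ?thesis
  proof
    assume ind: "independent_dec R D"
    show "indep_rel R D" unfolding indep_rel_def
    proof (intro allI impI)
      fix c assume c: "(\<Sum>e\<in>R. c e *\<^sub>R wv e) = 0"
      define v where "v A = (\<Sum>e\<in>A. c e *\<^sub>R wv e)" for A
      have "\<forall>A\<in>D. v A \<in> stoich_subspace A" unfolding v_def stoich_wv using sum_in_span by blast
      moreover have "(\<Sum>A\<in>D. v A) = 0" unfolding v_def using c sum_decomp[OF fin dec, of "\<lambda>e. c e *\<^sub>R wv e"] by simp
      ultimately show "\<forall>A\<in>D. (\<Sum>e\<in>A. c e *\<^sub>R wv e) = 0" using ind unfolding independent_dec_def v_def by blast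
    qed
  next
    assume ir: "indep_rel R D"
    have part1: "stoich_subspace R = {(\<Sum>A\<in>D. v A) | v. \<forall>A\<in>D. v A \<in> stoich_subspace A}"
    proof (intro set_eqI iffI)
      fix x assume "x \<in> stoich_subspace R"
      then obtain c where c: "x = (\<Sum>e\<in>R. c e *\<^sub>R wv e)" using span_image_sum[OF fin, of x] stoich_wv by auto
      define v where "v A = (\<Sum>e\<in>A. c e *\<^sub>R wv e)" for A
      have "\<forall>A\<in>D. v A \<in> stoich_subspace A" unfolding v_def stoich_wv using sum_in_span by blast
      moreover have "x = (\<Sum>A\<in>D. v A)" unfolding v_def using c sum_decomp[OF fin dec, of "\<lambda>e. c e *\<^sub>R wv e"] by simp
      ultimately show "x \<in> {(\<Sum>A\<in>D. v A) | v. \<forall>A\<in>D. v A \<in> stoich_subspace A}" by blast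
    next
      fix x assume "x \<in> {(\<Sum>A\<in>D. v A) | v. \<forall>A\<in>D. v A \<in> stoich_subspace A}"
      then obtain v where v: "x = (\<Sum>A\<in>D. v A)" "\<forall>A\<in>D. v A \<in> stoich_subspace A" by blast
      have "\<forall>A\<in>D. v A \<in> span (wv ` R)"
      proof
        fix A assume "A \<in> D"
        hence "A \<subseteq> R" using d(1) by blast
        thus "v A \<in> span (wv ` R)" using v(2) \<open>A \<in> D\<close> stoich_wv span_mono[of "wv ` A" "wv ` R"] by blast
      qed
      then show "x \<in> stoich_subspace R" unfolding v(1) stoich_wv by (intro span_sum) auto
    qed
    have part2: "\<forall>v. (\<forall>A\<in>D. v A \<in> stoich_subspace A) \<and> (\<Sum>A\<in>D. v A) = 0 \<longrightarrow> (\<forall>A\<in>D. v A = 0)"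
    proof (intro allI impI)
      fix v assume v: "(\<forall>A\<in>D. v A \<in> stoich_subspace A) \<and> (\<Sum>A\<in>D. v A) = 0"
      have "\<forall>A\<in>D. \<exists>c. v A = (\<Sum>e\<in>A. c e *\<^sub>R wv e)"
      proof
        fix A assume A: "A \<in> D"
        have "v A \<in> span (wv ` A)" using v A by (simp add: stoich_wv)
        then show "\<exists>c. v A = (\<Sum>e\<in>A. c e *\<^sub>R wv e)" using span_image_sum[OF finA[OF A]] by simp
      qed
      from bchoice[OF this] obtain C where C: "\<forall>A\<in>D. v A = (\<Sum>e\<in>A. C A e *\<^sub>R wv e)" by (elim exE) (rule that, assumption)
      define c where "c e = C (THE A. A \<in> D \<and> e \<in> A) e" for e
      have th: "(THE A. A \<in> D \<and> e \<in> A) = A" if "A \<in> D" "e \<in> A" for A e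
        using d(2) that by (intro the_equality) blast+
      have vA: "v A = (\<Sum>e\<in>A. c e *\<^sub>R wv e)" if "A \<in> D" for A
      proof -
        have "(\<Sum>e\<in>A. C A e *\<^sub>R wv e) = (\<Sum>e\<in>A. c e *\<^sub>R wv e)"
          by (rule sum.cong) (simp_all add: c_def th[OF that])
        then show ?thesis using C that by simp
      qed
      have "(\<Sum>e\<in>R. c e *\<^sub>R wv e) = (\<Sum>A\<in>D. \<Sum>e\<in>A. c e *\<^sub>R wv e)"
        using sum_decomp[OF fin dec] .
      also have "\<dots> = (\<Sum>A\<in>D. v A)" by (rule sum.cong) (simp_all add: vA)
      also have "\<dots> = 0" using v by simp
      finally have "\<forall>A\<in>D. (\<Sum>e\<in>A. c e *\<^sub>R wv e) = 0" using ir unfolding indep_rel_def by blast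
      then show "\<forall>A\<in>D. v A = 0" using vA by simp
    qed
    show "independent_dec R D" unfolding independent_dec_def using part1 part2 by blast
  qed
qed

lemma indep_C1:
  assumes fin: "finite R" and dec: "decomposition R D" and ir: "indep_rel R D"
    and dec': "decomposition R D'" and rf: "refines D D'"
  shows "indep_rel R D'"
  unfolding indep_rel_def
proof (intro allI impI ballI)
  fix c A' assume c: "(\<Sum>e\<in>R. c e *\<^sub>R wv e) = 0" and A': "A' \<in> D'"
  have d: "\<Union>D = R" "{} \<notin> D" "\<forall>A\<in>D. \<forall>B\<in>D. A \<noteq> B \<longrightarrow> A \<inter> B = {}" using dec by (auto simp: decomposition_def)
  have d': "\<Union>D' = R" "\<forall>A\<in>D'. \<forall>B\<in>D'. A \<noteq> B \<longrightarrow> A \<inter> B = {}" using dec' by (auto simp: decomposition_def)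
  define F where "F = {A\<in>D. A \<subseteq> A'}"
  have UF: "\<Union>F = A'"
  proof
    show "\<Union>F \<subseteq> A'" unfolding F_def by blast
    show "A' \<subseteq> \<Union>F"
    proof
      fix x assume "x \<in> A'"
      then obtain A where A: "A \<in> D" "x \<in> A" using d(1) d'(1) A' by blast
      then obtain B where B: "B \<in> D'" "A \<subseteq> B" using rf unfolding refines_def by blast
      have "B = A'" using B A A' \<open>x \<in> A'\<close> d'(2) by blast
      then show "x \<in> \<Union>F" using A B unfolding F_def by blast
    qed
  qed
  have finA: "finite A" if "A \<in> D" for A using d(1) fin that by (metis Union_upper finite_subset)
  have "(\<Sum>e\<in>A'. c e *\<^sub>R wv e) = (\<Sum>A\<in>F. \<Sum>e\<in>A. c e *\<^sub>R wv e)"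
    using sum.Union_disjoint[of F "\<lambda>e. c e *\<^sub>R wv e"] UF finA d(3) unfolding F_def by auto
  also have "\<dots> = 0" using ir c unfolding indep_rel_def F_def by (intro sum.neutral) blast
  finally show "(\<Sum>e\<in>A'. c e *\<^sub>R wv e) = 0" .
qed

lemma indep_C2:
  assumes fin: "finite R" and ir1: "indep_rel R D1" and ir2: "indep_rel R D2"
    and dec1: "decomposition R D1" and dec2: "decomposition R D2"
  shows "indep_rel R (meet D1 D2)"
  unfolding indep_rel_def
proof (intro allI impI ballI)
  fix c X assume c: "(\<Sum>e\<in>R. c e *\<^sub>R wv e) = 0" and X: "X \<in> meet D1 D2"
  then obtain A B where AB: "A \<in> D1" "B \<in> D2" "X = A \<inter> B" unfolding meet_def by auto
  have AR: "A \<subseteq> R" using AB(1) dec1 unfolding decomposition_def by auto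
  have BR: "B \<subseteq> R" using AB(2) dec2 unfolding decomposition_def by auto
  define c' where "c' e = (if e \<in> A then c e else 0)" for e
  have eq: "(\<Sum>e\<in>Y. c' e *\<^sub>R wv e) = (\<Sum>e\<in>Y \<inter> A. c e *\<^sub>R wv e)" if "finite Y" for Y
  proof -
    have "(\<Sum>e\<in>Y. c' e *\<^sub>R wv e) = (\<Sum>e\<in>Y. if e \<in> A then c e *\<^sub>R wv e else 0)"
      by (rule sum.cong) (auto simp: c'_def)
    then show ?thesis using sum.inter_restrict[OF that, of "\<lambda>e. c e *\<^sub>R wv e" A] by simp
  qed
  have "(\<Sum>e\<in>R. c' e *\<^sub>R wv e) = (\<Sum>e\<in>A. c e *\<^sub>R wv e)" using eq[OF fin] AR by (simp add: Int_absorb1)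
  also have "\<dots> = 0" using ir1 c AB(1) unfolding indep_rel_def by simp
  finally have "(\<Sum>e\<in>R. c' e *\<^sub>R wv e) = 0" .
  hence "(\<Sum>e\<in>B. c' e *\<^sub>R wv e) = 0" using ir2 AB(2) unfolding indep_rel_def by simp
  moreover have "finite B" using BR fin finite_subset by auto
  ultimately have "(\<Sum>e\<in>B \<inter> A. c e *\<^sub>R wv e) = 0" using eq by simp
  then show "(\<Sum>e\<in>X. c e *\<^sub>R wv e) = 0" using AB(3) by (simp add: Int_commute)
qed



lemma dec_props:
  assumes "decomposition E D"
  shows "\<Union>D = E" "{} \<notin> D" "\<And>A B. A \<in> D \<Longrightarrow> B \<in> D \<Longrightarrow> A \<noteq> B \<Longrightarrow> A \<inter> B = {}"
  using assms unfolding decomposition_def by auto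

lemma dec_finite:
  assumes "finite E" "decomposition E D"
  shows "finite D" "\<And>A. A \<in> D \<Longrightarrow> finite A" "\<And>A. A \<in> D \<Longrightarrow> A \<subseteq> E"
  using dec_props[OF assms(2)] assms(1) finite_UnionD apply metis
  using dec_props[OF assms(2)] assms(1) apply (metis Union_upper finite_subset)
  using dec_props[OF assms(2)] by blast

lemma refine_union:
  assumes "decomposition E D" "decomposition E D'" "refines D D'" "A' \<in> D'"
  shows "\<Union>{A\<in>D. A \<subseteq> A'} = A'"
proof
  note d = dec_props[OF assms(1)] and d' = dec_props[OF assms(2)]
  show "\<Union>{A\<in>D. A \<subseteq> A'} \<subseteq> A'" by auto
  show "A' \<subseteq> \<Union>{A\<in>D. A \<subseteq> A'}"
  proof
    fix x assume x: "x \<in> A'"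
    then have "x \<in> E" using d'(1) assms(4) by auto
    then obtain A where A: "A \<in> D" "x \<in> A" using d(1) by auto
    then obtain B where B: "B \<in> D'" "A \<subseteq> B" using assms(3) unfolding refines_def by auto
    have "x \<in> B \<inter> A'" using A B x by auto
    then have "B = A'" using d'(3)[OF B(1) assms(4)] by auto
    then show "x \<in> \<Union>{A\<in>D. A \<subseteq> A'}" using A B by auto
  qed
qed

locale submod =
  fixes E :: "('s::finite) reaction set" and f :: "'s reaction set \<Rightarrow> int"
  assumes fin: "finite E" and f0: "f {} = 0"
    and sub: "\<And>A B. A \<subseteq> E \<Longrightarrow> B \<subseteq> E \<Longrightarrow> f (A \<union> B) + f (A \<inter> B) \<le> f A + f B"
begin

lemma subadd_disj: "A \<subseteq> E \<Longrightarrow> B \<subseteq> E \<Longrightarrow> A \<inter> B = {} \<Longrightarrow> f (A \<union> B) \<le> f A + f B"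
  using sub[of A B] f0 by simp

lemma L1:
  assumes "finite D" "\<Union>D \<subseteq> E" "\<And>A B. A \<in> D \<Longrightarrow> B \<in> D \<Longrightarrow> A \<noteq> B \<Longrightarrow> A \<inter> B = {}"
  shows "f (\<Union>D) \<le> (\<Sum>A\<in>D. f A)"
  using assms
proof (induction D rule: finite_induct)
  case empty
  then show ?case using f0 by simp
next
  case (insert X D)
  have dj: "X \<inter> \<Union>D = {}" using insert.prems(2) insert.hyps(2) by fastforce
  have "f (\<Union>(insert X D)) = f (X \<union> \<Union>D)" by simp
  also have "\<dots> \<le> f X + f (\<Union>D)" using subadd_disj[OF _ _ dj] insert.prems(1) by auto
  also have "f (\<Union>D) \<le> (\<Sum>A\<in>D. f A)" using insert.IH insert.prems by auto
  finally show ?case using insert.hyps by simp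
qed

definition prp :: "'s reaction set set \<Rightarrow> bool" where
  "prp D \<longleftrightarrow> f E = (\<Sum>A\<in>D. f A)"

lemma L1_dec: assumes "decomposition E D" shows "f E \<le> (\<Sum>A\<in>D. f A)"
proof -
  note d = dec_props[OF assms]
  have "f (\<Union>D) \<le> (\<Sum>A\<in>D. f A)" by (rule L1) (use dec_finite(1)[OF fin assms] d in auto)
  then show ?thesis using d(1) by simp
qed

lemma C1:
  assumes D: "decomposition E D" "prp D" and D': "decomposition E D'" and rf: "refines D D'"
  shows "prp D'"
proof -
  note d = dec_props[OF D(1)] and d' = dec_props[OF D'(1)]
  note fd = dec_finite[OF fin D(1)] and fd' = dec_finite[OF fin D'(1)]
  define F where "F A' = {A\<in>D. A \<subseteq> A'}" for A'
  have le: "f A' \<le> (\<Sum>A\<in>F A'. f A)" if "A' \<in> D'" for A'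
  proof -
    have "\<Union>(F A') = A'" unfolding F_def using refine_union[OF D(1) D'(1) rf that] .
    moreover have "finite (F A')" unfolding F_def using fd(1) by auto
    moreover have "\<Union>(F A') \<subseteq> E" unfolding F_def using that fd'(3) by auto
    ultimately show ?thesis using L1[of "F A'"] d(3) unfolding F_def by auto
  qed
  have DU: "D = \<Union>(F ` D')"
  proof
    show "\<Union>(F ` D') \<subseteq> D" unfolding F_def by auto
    show "D \<subseteq> \<Union>(F ` D')"
    proof
      fix A assume "A \<in> D"
      then obtain B where "B \<in> D'" "A \<subseteq> B" using rf unfolding refines_def by auto
      then show "A \<in> \<Union>(F ` D')" unfolding F_def using \<open>A \<in> D\<close> by auto
    qed
  qed
  have dF: "F i \<inter> F j = {}" if "i \<in> D'" "j \<in> D'" "i \<noteq> j" for i j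
  proof (rule ccontr)
    assume "F i \<inter> F j \<noteq> {}"
    then obtain A where "A \<in> D" "A \<subseteq> i" "A \<subseteq> j" unfolding F_def by auto
    moreover have "i \<inter> j = {}" using d'(3) that by auto
    ultimately have "A = {}" by auto
    then show False using \<open>A \<in> D\<close> d(2) by auto
  qed
  have "(\<Sum>A\<in>D. f A) = (\<Sum>A'\<in>D'. \<Sum>A\<in>F A'. f A)"
    unfolding DU by (rule sum.UNION_disjoint) (use fd'(1) fd(1) dF in \<open>auto simp: F_def\<close>)
  also have "\<dots> \<ge> (\<Sum>A'\<in>D'. f A')" using le by (intro sum_mono) auto
  finally have "(\<Sum>A'\<in>D'. f A') \<le> f E" using D(2) unfolding prp_def by simp
  then show ?thesis using L1_dec[OF D'(1)] unfolding prp_def by simp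
qed

lemma sep2:
  assumes D: "decomposition E D" "prp D" and X: "X \<in> D"
  shows "f E = f X + f (E - X)"
proof -
  note d = dec_props[OF D(1)] and fd = dec_finite[OF fin D(1)]
  have XE: "X \<subseteq> E" using fd(3) X .
  have "f E = f (X \<union> (E - X))" using XE by (simp add: Un_absorb1)
  also have "\<dots> \<le> f X + f (E - X)" by (rule subadd_disj) (use XE in auto)
  finally have a: "f E \<le> f X + f (E - X)" .
  have U: "\<Union>(D - {X}) = E - X"
  proof
    show "\<Union>(D - {X}) \<subseteq> E - X" using d(1) d(3) X by auto
    show "E - X \<subseteq> \<Union>(D - {X})" using d(1) by auto
  qed
  have "f (E - X) \<le> (\<Sum>A\<in>D - {X}. f A)"
    using L1[of "D - {X}"] U fd(1) d(3) by auto
  moreover have "f E = f X + (\<Sum>A\<in>D - {X}. f A)"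
    using D(2) sum.remove[OF fd(1) X, of f] unfolding prp_def by simp
  ultimately show ?thesis using a by simp
qed

lemma sepZ:
  assumes D: "decomposition E D" "prp D" and X: "X \<in> D" and Z: "Z \<subseteq> E"
  shows "f (Z \<inter> X) + f (Z - X) \<le> f Z"
proof -
  have XE: "X \<subseteq> E" using dec_finite(3)[OF fin D(1) X] .
  define Y where "Y = E - X"
  have s1: "f ((X \<union> (Z \<inter> Y)) \<union> Y) + f ((X \<union> (Z \<inter> Y)) \<inter> Y) \<le> f (X \<union> (Z \<inter> Y)) + f Y"
    by (rule sub) (use XE Z in \<open>auto simp: Y_def\<close>)
  have e1: "(X \<union> (Z \<inter> Y)) \<union> Y = E" using XE by (auto simp: Y_def)
  have e2: "(X \<union> (Z \<inter> Y)) \<inter> Y = Z - X" using Z by (auto simp: Y_def)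
  have s2: "f (X \<union> Z) + f (X \<inter> Z) \<le> f X + f Z" by (rule sub) (use XE Z in auto)
  have e3: "X \<union> Z = X \<union> (Z \<inter> Y)" using Z by (auto simp: Y_def)
  have "f E = f X + f Y" using sep2[OF D X] by (simp add: Y_def)
  then show ?thesis using s1 s2 e1 e2 e3 by (simp add: Int_commute)
qed

lemma sepF:
  assumes D: "decomposition E D" "prp D" and Z: "Z \<subseteq> E"
    and F: "finite F" "F \<subseteq> D"
  shows "(\<Sum>A\<in>F. f (Z \<inter> A)) \<le> f (Z \<inter> \<Union>F)"
  using F
proof (induction F rule: finite_induct)
  case empty
  then show ?case using f0 by simp
next
  case (insert X F)
  note d = dec_props[OF D(1)]
  have X: "X \<in> D" using insert.prems by auto
  have "Z \<inter> \<Union>(insert X F) \<subseteq> E" using Z by auto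
  note s = sepZ[OF D X this]
  have e1: "Z \<inter> \<Union>(insert X F) \<inter> X = Z \<inter> X" by auto
  have "\<forall>B\<in>F. X \<inter> B = {}" using d(3) X insert.prems insert.hyps(2) by auto
  then have e2: "Z \<inter> \<Union>(insert X F) - X = Z \<inter> \<Union>F" by auto
  have "(\<Sum>A\<in>insert X F. f (Z \<inter> A)) = f (Z \<inter> X) + (\<Sum>A\<in>F. f (Z \<inter> A))"
    using insert.hyps by simp
  also have "\<dots> \<le> f (Z \<inter> X) + f (Z \<inter> \<Union>F)" using insert.IH insert.prems by simp
  also have "\<dots> \<le> f (Z \<inter> \<Union>(insert X F))" using s e1 e2 by simp
  finally show ?case .
qed

lemma C2:
  assumes D1: "decomposition E D1" "prp D1" and D2: "decomposition E D2" "prp D2"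
  shows "prp (meet D1 D2)"
proof -
  note d1 = dec_props[OF D1(1)] and d2 = dec_props[OF D2(1)]
  note fd1 = dec_finite[OF fin D1(1)] and fd2 = dec_finite[OF fin D2(1)]
  have a: "(\<Sum>A\<in>D1. f (B \<inter> A)) \<le> f B" if "B \<in> D2" for B
  proof -
    have "B \<subseteq> E" using fd2(3) that .
    then have "B \<inter> \<Union>D1 = B" using d1(1) by auto
    then show ?thesis using sepF[OF D1 \<open>B \<subseteq> E\<close> fd1(1) order_refl] by simp
  qed
  define g :: "'s reaction set \<times> 's reaction set \<Rightarrow> 's reaction set" where "g = (\<lambda>(B, A). B \<inter> A)"
  define S where "S = {p \<in> D2 \<times> D1. g p \<noteq> {}}"
  have "(\<Sum>B\<in>D2. \<Sum>A\<in>D1. f (B \<inter> A)) \<le> (\<Sum>B\<in>D2. f B)" using a by (intro sum_mono) auto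
  also have "\<dots> = f E" using D2(2) unfolding prp_def by simp
  finally have b: "(\<Sum>p\<in>D2 \<times> D1. f (g p)) \<le> f E"
    unfolding g_def by (simp add: sum.cartesian_product split_def)
  have "(\<Sum>p\<in>D2 \<times> D1. f (g p)) = (\<Sum>p\<in>S. f (g p))"
    by (rule sum.mono_neutral_right) (use fd1(1) fd2(1) f0 in \<open>auto simp: S_def\<close>)
  also have "\<dots> = (\<Sum>C\<in>g ` S. f C)"
  proof -
    have "inj_on g S"
    proof (rule inj_onI)
      fix p q assume p: "p \<in> S" and q: "q \<in> S" and e: "g p = g q"
      obtain B A where pBA: "p = (B, A)" by (cases p)
      obtain B' A' where qBA: "q = (B', A')" by (cases q)
      have m: "B \<in> D2" "A \<in> D1" "B' \<in> D2" "A' \<in> D1" "B \<inter> A \<noteq> {}" "B \<inter> A = B' \<inter> A'"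
        using p q e pBA qBA by (auto simp: S_def g_def)
      have "B = B'" using d2(3)[OF m(1) m(3)] m(5) m(6) by blast
      moreover have "A = A'" using d1(3)[OF m(2) m(4)] m(5) m(6) by blast
      ultimately show "p = q" using pBA qBA by simp
    qed
    then show ?thesis by (simp add: sum.reindex)
  qed
  also have "g ` S = meet D1 D2"
  proof
    show "g ` S \<subseteq> meet D1 D2" unfolding S_def g_def meet_def by (auto simp: Int_commute)
    show "meet D1 D2 \<subseteq> g ` S"
    proof
      fix C assume "C \<in> meet D1 D2"
      then obtain A B where "A \<in> D1" "B \<in> D2" "C = A \<inter> B" "C \<noteq> {}" unfolding meet_def by auto
      then have "(B, A) \<in> S" "C = g (B, A)" unfolding S_def g_def by auto
      then show "C \<in> g ` S" by blast
    qed
  qed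
  finally have "(\<Sum>C\<in>meet D1 D2. f C) \<le> f E" using b by simp
  then show ?thesis using L1_dec[OF meet_decomposition[OF D1(1) D2(1)]] unfolding prp_def by simp
qed

end



definition rl :: "('s::finite) reaction set \<Rightarrow> ('s complex \<times> 's complex) set" where
  "rl A = (A \<union> A\<inverse>)\<^sup>*"

lemma rl_refl: "(x, x) \<in> rl A" unfolding rl_def by simp

lemma rl_sym: "(x, y) \<in> rl A \<Longrightarrow> (y, x) \<in> rl A"
proof -
  have "sym (A \<union> A\<inverse>)" by (auto simp: sym_def)
  then have "sym (rl A)" unfolding rl_def by (rule sym_rtrancl)
  then show "(x, y) \<in> rl A \<Longrightarrow> (y, x) \<in> rl A" by (auto simp: sym_def)
qed

lemma rl_trans: "(x, y) \<in> rl A \<Longrightarrow> (y, z) \<in> rl A \<Longrightarrow> (x, z) \<in> rl A"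
  unfolding rl_def by (rule rtrancl_trans)

lemma rl_mono: "A \<subseteq> B \<Longrightarrow> rl A \<subseteq> rl B"
  unfolding rl_def by (intro rtrancl_mono) auto

lemma rl_base: "e \<in> A \<Longrightarrow> (fst e, snd e) \<in> rl A"
  unfolding rl_def by (auto intro: r_into_rtrancl)

lemma quot_image: "A // r = (\<lambda>x. r``{x}) ` A" by (auto simp: quotient_def)

lemma nml:
  assumes fin: "finite R" and AR: "A \<subseteq> R"
  shows "n_minus_l A = int (card (complexes R)) - int (card (complexes R // rl A))"
proof -
  define V where "V = complexes R"
  define CA where "CA = complexes A"
  define r where "r = rl A"
  have fV: "finite V" using fin unfolding V_def complexes_def by simp
  have CAV: "CA \<subseteq> V" using AR unfolding CA_def V_def complexes_def by auto
  have fCA: "finite CA" using CAV fV finite_subset by auto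
  have dom: "Domain (A \<union> A\<inverse>) = CA" unfolding CA_def complexes_def by force
  have sing: "r``{x} = {x}" if "x \<notin> CA" for x
    using Not_Domain_rtrancl[of x "A \<union> A\<inverse>"] that dom unfolding r_def rl_def by auto
  have q: "V // r = CA // r \<union> (\<lambda>x. {x}) ` (V - CA)"
  proof -
    have "V // r = (\<lambda>x. r``{x}) ` CA \<union> (\<lambda>x. r``{x}) ` (V - CA)"
      unfolding quot_image using CAV by auto
    also have "(\<lambda>x. r``{x}) ` (V - CA) = (\<lambda>x. {x}) ` (V - CA)"
      using sing by (intro image_cong) auto
    finally show ?thesis unfolding quot_image .
  qed
  have dj: "CA // r \<inter> (\<lambda>x. {x}) ` (V - CA) = {}"
  proof (rule ccontr)
    assume "CA // r \<inter> (\<lambda>x. {x}) ` (V - CA) \<noteq> {}"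
    then obtain x y where xy: "x \<in> CA" "y \<in> V - CA" "r``{x} = {y}" unfolding quot_image by auto
    have "x \<in> r``{x}" using rl_refl unfolding r_def by auto
    then show False using xy by auto
  qed
  have fq: "finite (CA // r)" unfolding quot_image using fCA by simp
  have "card (V // r) = card (CA // r) + card (V - CA)"
    unfolding q using dj fq fV by (simp add: card_Un_disjoint card_image)
  moreover have "card (V - CA) = card V - card CA" using CAV fCA by (simp add: card_Diff_subset)
  moreover have "card CA \<le> card V" using CAV fV by (simp add: card_mono)
  moreover have "n_minus_l A = int (card CA) - int (card (CA // r))"
    unfolding n_minus_l_def linkage_classes_def CA_def r_def rl_def ..
  ultimately show ?thesis unfolding V_def[symmetric] r_def[symmetric] by simp
qed

lemma edge_char:
  assumes nc: "(u, v) \<notin> rl X"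
  shows "rl (insert (u, v) X) = rl X \<union> {(a, b). ((a, u) \<in> rl X \<and> (v, b) \<in> rl X) \<or> ((a, v) \<in> rl X \<and> (u, b) \<in> rl X)}"
    (is "_ = ?M")
proof
  let ?r = "rl X"
  let ?s = "insert (u, v) X \<union> (insert (u, v) X)\<inverse>"
  have stp: "(a, c) \<in> ?M" if ab: "(a, b) \<in> ?M" and bc: "(b, c) \<in> ?s" for a b c
  proof -
    have bc': "(b, c) \<in> ?r \<or> (b, c) = (u, v) \<or> (b, c) = (v, u)"
      using bc rl_base[of _ X] rl_sym[of _ _ X] by (auto simp: rl_def intro: r_into_rtrancl)
    show ?thesis using ab bc' rl_trans[of _ _ X] rl_sym[of _ _ X] rl_refl[of _ X] by blast
  qed
  show "rl (insert (u, v) X) \<subseteq> ?M"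
  proof
    fix p assume "p \<in> rl (insert (u, v) X)"
    then obtain a c where p: "p = (a, c)" "(a, c) \<in> ?s\<^sup>*" unfolding rl_def by (cases p) auto
    have "(a, c) \<in> ?M" using p(2)
    proof (induction rule: rtrancl_induct)
      case base
      then show ?case using rl_refl by auto
    next
      case (step b c)
      then show ?case using stp by blast
    qed
    then show "p \<in> ?M" using p by simp
  qed
  show "?M \<subseteq> rl (insert (u, v) X)"
  proof -
    have sub: "?r \<subseteq> rl (insert (u, v) X)" by (rule rl_mono) auto
    have uv: "(u, v) \<in> rl (insert (u, v) X)" using rl_base[of "(u, v)"] by simp
    have vu: "(v, u) \<in> rl (insert (u, v) X)" using rl_sym[OF uv] .
    show ?thesis using sub uv vu rl_trans[of _ _ "insert (u, v) X"] by blast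
  qed
qed

lemma edge_card:
  fixes X :: "('s::finite) reaction set"
  assumes fV: "finite V" and uV: "u \<in> V" "v \<in> V"
    and cl: "\<And>x y. x \<in> V \<Longrightarrow> (x, y) \<in> rl X \<Longrightarrow> y \<in> V"
  shows "(u, v) \<in> rl X \<Longrightarrow> card (V // rl (insert (u, v) X)) = card (V // rl X)"
    and "(u, v) \<notin> rl X \<Longrightarrow> card (V // rl X) = card (V // rl (insert (u, v) X)) + 1"
proof -
  let ?r = "rl X" and ?r' = "rl (insert (u, v) X)"
  assume uv: "(u, v) \<in> ?r"
  have "?r' \<subseteq> ?r" unfolding rl_def
  proof (rule rtrancl_subset_rtrancl)
    show "insert (u, v) X \<union> (insert (u, v) X)\<inverse> \<subseteq> (X \<union> X\<inverse>)\<^sup>*"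
      using uv rl_sym[OF uv] unfolding rl_def by (auto intro: r_into_rtrancl)
  qed
  moreover have "?r \<subseteq> ?r'" by (rule rl_mono) auto
  ultimately show "card (V // ?r') = card (V // ?r)" by simp
next
  let ?r = "rl X" and ?r' = "rl (insert (u, v) X)"
  assume nuv: "(u, v) \<notin> ?r"
  note ch = edge_char[OF nuv]
  define cu where "cu = ?r``{u}"
  define cv where "cv = ?r``{v}"
  have ceq: "?r``{x} = ?r``{y}" if "(x, y) \<in> ?r" for x y
    using that rl_trans[of _ _ X] rl_sym[of _ _ X] by blast
  have ucu: "u \<in> cu" "v \<in> cv" unfolding cu_def cv_def using rl_refl by auto
  have nucv: "u \<notin> cv" "v \<notin> cu" unfolding cu_def cv_def using nuv rl_sym[of _ _ X] by auto
  have memb: "?r'``{x} = ?r``{x} \<union> (if u \<in> ?r``{x} then cv else {}) \<union> (if v \<in> ?r``{x} then cu else {})" for x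
    unfolding ch cu_def cv_def by auto
  have cls: "?r'``{x} = (if (x, u) \<in> ?r \<or> (x, v) \<in> ?r then cu \<union> cv else ?r``{x})" for x
  proof (cases "(x, u) \<in> ?r \<or> (x, v) \<in> ?r")
    case True
    then have "?r``{x} = cu \<or> ?r``{x} = cv" using ceq unfolding cu_def cv_def by auto
    then show ?thesis using True memb[of x] ucu nucv by auto
  next
    case False
    then show ?thesis using memb[of x] by auto
  qed
  have Q: "V // ?r' = insert (cu \<union> cv) (V // ?r - {cu, cv})"
  proof
    show "V // ?r' \<subseteq> insert (cu \<union> cv) (V // ?r - {cu, cv})"
    proof
      fix C assume "C \<in> V // ?r'"
      then obtain x where x: "x \<in> V" "C = ?r'``{x}" unfolding quot_image by auto
      show "C \<in> insert (cu \<union> cv) (V // ?r - {cu, cv})"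
      proof (cases "(x, u) \<in> ?r \<or> (x, v) \<in> ?r")
        case True
        then show ?thesis using x cls by simp
      next
        case False
        have "x \<in> ?r``{x}" using rl_refl by auto
        then have "?r``{x} \<noteq> cu" "?r``{x} \<noteq> cv" using False rl_sym[of _ _ X] unfolding cu_def cv_def by auto
        moreover have "?r``{x} \<in> V // ?r" using x(1) unfolding quot_image by auto
        ultimately show ?thesis using x cls False by simp
      qed
    qed
    show "insert (cu \<union> cv) (V // ?r - {cu, cv}) \<subseteq> V // ?r'"
    proof
      fix C assume C: "C \<in> insert (cu \<union> cv) (V // ?r - {cu, cv})"
      show "C \<in> V // ?r'"
      proof (cases "C = cu \<union> cv")
        case True
        then have "C = ?r'``{u}" using cls[of u] rl_refl[of u X] by simp
        then show ?thesis using uV(1) unfolding quot_image by auto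
      next
        case False
        then obtain x where x: "x \<in> V" "C = ?r``{x}" "C \<noteq> cu" "C \<noteq> cv" using C unfolding quot_image by auto
        have "\<not> ((x, u) \<in> ?r \<or> (x, v) \<in> ?r)" using x ceq unfolding cu_def cv_def by auto
        then have "C = ?r'``{x}" using cls[of x] x by simp
        then show ?thesis using x(1) unfolding quot_image by auto
      qed
    qed
  qed
  have fq: "finite (V // ?r)" unfolding quot_image using fV by simp
  have cuq: "cu \<in> V // ?r" "cv \<in> V // ?r" unfolding cu_def cv_def quot_image using uV by auto
  have cuv: "cu \<noteq> cv"
  proof
    assume "cu = cv"
    have "u \<in> cu" unfolding cu_def using rl_refl by auto
    then have "u \<in> cv" using \<open>cu = cv\<close> by simp
    then show False using nuv rl_sym[of v u X] unfolding cv_def by auto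
  qed
  have nin: "cu \<union> cv \<notin> V // ?r - {cu, cv}"
  proof
    assume "cu \<union> cv \<in> V // ?r - {cu, cv}"
    then obtain x where x: "x \<in> V" "cu \<union> cv = ?r``{x}" "?r``{x} \<noteq> cu" unfolding quot_image by auto
    have "u \<in> cu" unfolding cu_def using rl_refl by auto
    then have "(x, u) \<in> ?r" using x(2) by auto
    then show False using ceq x(3) unfolding cu_def by auto
  qed
  have "card (V // ?r') = Suc (card (V // ?r - {cu, cv}))"
    unfolding Q using nin fq by simp
  also have "card (V // ?r - {cu, cv}) = card (V // ?r) - 2"
    using cuq cuv fq by (simp add: card_Diff_subset)
  finally have a: "card (V // ?r') = Suc (card (V // ?r) - 2)" .
  have "card {cu, cv} \<le> card (V // ?r)" using cuq fq by (intro card_mono) auto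
  then have "2 \<le> card (V // ?r)" using cuv by simp
  then show "card (V // ?r) = card (V // ?r') + 1" using a by simp
qed


lemma rl_closed:
  assumes "X \<subseteq> R" "x \<in> complexes R" "(x, y) \<in> rl X"
  shows "y \<in> complexes R"
  using assms(3)[unfolded rl_def]
proof (induction rule: rtrancl_induct)
  case base then show ?case using assms(2) .
next
  case (step b c)
  then have "(b, c) \<in> R \<or> (c, b) \<in> R" using assms(1) by auto
  then show ?case unfolding complexes_def by (metis fst_conv snd_conv image_eqI UnI1 UnI2)
qed

definition cc :: "('s::finite) reaction set \<Rightarrow> 's reaction set \<Rightarrow> int" where
  "cc R X = int (card (complexes R // rl X))"

lemma marg:
  assumes fin: "finite R" and XR: "X \<subseteq> R" and e: "e \<in> R"
  shows "cc R X - cc R (insert e X) = (if (fst e, snd e) \<in> rl X then 0 else 1)"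
proof -
  obtain u v where uv: "e = (u, v)" by (cases e)
  have fV: "finite (complexes R)" using fin unfolding complexes_def by simp
  have uV: "u \<in> complexes R" "v \<in> complexes R" using e uv unfolding complexes_def by force+
  note ec = edge_card[OF fV uV, of X, OF rl_closed[OF XR]]
  show ?thesis
  proof (cases "(u, v) \<in> rl X")
    case True
    then show ?thesis using ec(1) uv unfolding cc_def by simp
  next
    case False
    then show ?thesis using ec(2) uv unfolding cc_def by simp
  qed
qed

lemma dimin:
  assumes fin: "finite R" and XY: "X \<subseteq> Y" "Y \<subseteq> R" and e: "e \<in> R"
  shows "cc R Y - cc R (insert e Y) \<le> cc R X - cc R (insert e X)"
proof -
  have "rl X \<subseteq> rl Y" using XY(1) by (rule rl_mono)
  then show ?thesis using marg[OF fin XY(2) e] marg[OF fin order_trans[OF XY] e] by auto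
qed

lemma indK:
  assumes fin: "finite R" and K: "finite K" "K \<subseteq> R"
  shows "X \<subseteq> Y \<Longrightarrow> Y \<subseteq> R \<Longrightarrow> cc R Y - cc R (Y \<union> K) \<le> cc R X - cc R (X \<union> K)"
  using K
proof (induction K rule: finite_induct)
  case empty
  then show ?case by simp
next
  case (insert e K)
  have a: "cc R Y - cc R (Y \<union> K) \<le> cc R X - cc R (X \<union> K)" using insert by auto
  have b: "cc R (Y \<union> K) - cc R (insert e (Y \<union> K)) \<le> cc R (X \<union> K) - cc R (insert e (X \<union> K))"
    by (rule dimin[OF fin]) (use insert in auto)
  show ?case using a b by simp
qed

lemma nml_submod:
  assumes fin: "finite R" and AB: "A \<subseteq> R" "B \<subseteq> R"
  shows "n_minus_l (A \<union> B) + n_minus_l (A \<inter> B) \<le> n_minus_l A + n_minus_l B"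
proof -
  have fK: "finite (A - B)" using AB fin finite_subset by blast
  have "cc R B - cc R (B \<union> (A - B)) \<le> cc R (A \<inter> B) - cc R ((A \<inter> B) \<union> (A - B))"
    by (rule indK[OF fin fK]) (use AB in auto)
  moreover have "B \<union> (A - B) = A \<union> B" "(A \<inter> B) \<union> (A - B) = A" by auto
  ultimately have "cc R B - cc R (A \<union> B) \<le> cc R (A \<inter> B) - cc R A" by simp
  moreover have "n_minus_l Z = int (card (complexes R)) - cc R Z" if "Z \<subseteq> R" for Z
    using nml[OF fin that] unfolding cc_def .
  ultimately show ?thesis using AB by (simp add: le_infI1 )
qed

lemma nml_empty: "n_minus_l {} = 0"
  unfolding n_minus_l_def linkage_classes_def complexes_def by simp

lemma submod_nml: "finite R \<Longrightarrow> submod R n_minus_l"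
  by (unfold_locales) (auto intro: nml_submod simp: nml_empty)


theorem mainTheorem3:
  fixes R :: "('s::finite) reaction set"
    and P Q :: "'s reaction set set"
  assumes "is_crn R"
    and "finest_dec independent_dec R P" and "card P = p" and "p \<ge> 2"
    and "finest_dec incidence_independent_dec R Q" and "card Q = q" and "q \<ge> 2"
  shows "card {D. decomposition R D \<and> independent_dec R D} = Bell p
       \<and> card {D. decomposition R D \<and> incidence_independent_dec R D} = Bell q"
proof
  have fin: "finite R" using assms(1) unfolding is_crn_def by simp
  have "card {D. decomposition R D \<and> independent_dec R D} = Bell (card P)"
  proof (rule finest_count[OF fin assms(2)])
    fix D D' assume "decomposition R D" "independent_dec R D" "decomposition R D'" "refines D D'"
    then show "independent_dec R D'" using indep_iff[OF fin] indep_C1[OF fin] by metis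
  next
    fix D1 D2 assume d: "decomposition R D1" "decomposition R D2" "independent_dec R D1" "independent_dec R D2"
    have "indep_rel R (meet D1 D2)"
      using indep_C2[OF fin _ _ d(1) d(2)] indep_iff[OF fin d(1)] indep_iff[OF fin d(2)] d(3,4) by simp
    then show "independent_dec R (meet D1 D2)"
      using indep_iff[OF fin meet_decomposition[OF d(1) d(2)]] by simp
  qed
  then show "card {D. decomposition R D \<and> independent_dec R D} = Bell p" using assms(3) by simp
next
  have fin: "finite R" using assms(1) unfolding is_crn_def by simp
  interpret sm: submod R n_minus_l by (rule submod_nml[OF fin])
  have eqp: "incidence_independent_dec R D \<longleftrightarrow> sm.prp D" for D
    unfolding incidence_independent_dec_def sm.prp_def ..
  have "card {D. decomposition R D \<and> incidence_independent_dec R D} = Bell (card Q)"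
  proof (rule finest_count[OF fin assms(5)])
    fix D D' assume "decomposition R D" "incidence_independent_dec R D" "decomposition R D'" "refines D D'"
    then show "incidence_independent_dec R D'" using sm.C1 eqp by metis
  next
    fix D1 D2 assume d: "decomposition R D1" "decomposition R D2" "incidence_independent_dec R D1" "incidence_independent_dec R D2"
    then show "incidence_independent_dec R (meet D1 D2)" using sm.C2 eqp by metis
  qed
  then show "card {D. decomposition R D \<and> incidence_independent_dec R D} = Bell q" using assms(6) by simp
qed

end
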